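(* Let $1\le f\le\lfloor n/2\rfloor$ and $d\in\mathcal D_f$. Then $\ell(wd)\ge\ell(d)$ for every $w\in\Psi$.
   Context: $\mathfrak S_n$ acts on $\{1,\dots,n\}$ on the right: $(a)(\sigma\tau)=((a)\sigma)\tau$; $s_j=(j,j+1)$, $\ell$ is the Coxeter length (number of inversions). Let $\nu_f=((2^f),(n-2f))$ and $\mathfrak t^{\nu_f}$ the bitableau with $1,\dots,n$ entered in order along the rows of the first component (shape $(2^f)$) and then along the single row of the second component; $\mathfrak t^{\nu_f}d$ replaces each entry $a$ by $(a)d$. $\mathcal D_{\nu_f}$ is the set of $d\in\mathfrak S_n$ such that $\mathfrak t^{\nu_f}d$ is row standard and the first column of its first component increases from top to bottom; $\mathcal D_f=\mathcal D_{\nu_f}\cap\mathfrak S_{2f}$. $\mathfrak S_{(2^f)}$ is the subgroup generated by $s_1,s_3,\dots,s_{2f-1}$; $\Pi$ is the subgroup of $\mathfrak S_{2f}$ permuting the rows of the first component of $\mathfrak t^{\nu_f}$ while keeping the entries within rows in order (generated by $\tilde s_i=s_{2i}s_{2i-1}s_{2i+1}s_{2i}$, $1\le i\le f-1$); $\Psi=\mathfrak S_{(2^f)}\rtimes\Pi$. *)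

theory Defs
  imports "HOL-Combinatorics.Combinatorics"
begin

text \<open>The symmetric group acts on the RIGHT: (a)(sigma tau) = ((a)sigma)tau,
  so the product sigma tau is the function tau o sigma.\<close>

definition Sym :: "nat \<Rightarrow> (nat \<Rightarrow> nat) set" where
  "Sym n = {\<sigma>. \<sigma> permutes {1..n}}"

definition rmult :: "(nat \<Rightarrow> nat) \<Rightarrow> (nat \<Rightarrow> nat) \<Rightarrow> (nat \<Rightarrow> nat)" where
  "rmult \<sigma> \<tau> = \<tau> \<circ> \<sigma>"

definition sgen :: "nat \<Rightarrow> (nat \<Rightarrow> nat)" where
  "sgen j = transpose j (j + 1)"

text \<open>Coxeter length = number of inversions.\<close>
definition len :: "nat \<Rightarrow> (nat \<Rightarrow> nat) \<Rightarrow> nat" where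
  "len n \<sigma> = card {(i, j). 1 \<le> i \<and> i < j \<and> j \<le> n \<and> \<sigma> i > \<sigma> j}"

text \<open>D_{nu_f}: t^{nu_f} d row standard and first column of the first component increasing.
  Row i of the first component of t^{nu_f} is (2i-1, 2i); second component is 2f+1,...,n.\<close>
definition D_nu :: "nat \<Rightarrow> nat \<Rightarrow> (nat \<Rightarrow> nat) set" where
  "D_nu n f = {d \<in> Sym n.
      (\<forall>i\<in>{1..f}. d (2*i - 1) < d (2*i)) \<and>
      (\<forall>a. 2*f < a \<and> a < n \<longrightarrow> d a < d (a + 1)) \<and>
      (\<forall>i\<in>{1..<f}. d (2*i - 1) < d (2*i + 1))}"

definition D_f :: "nat \<Rightarrow> nat \<Rightarrow> (nat \<Rightarrow> nat) set" where
  "D_f n f = D_nu n f \<inter> Sym (2*f)"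

inductive_set gen_group :: "(nat \<Rightarrow> nat) set \<Rightarrow> (nat \<Rightarrow> nat) set" for S where
  gen_id: "id \<in> gen_group S"
| gen_gen: "s \<in> S \<Longrightarrow> s \<in> gen_group S"
| gen_mult: "g \<in> gen_group S \<Longrightarrow> h \<in> gen_group S \<Longrightarrow> rmult g h \<in> gen_group S"
| gen_inv: "g \<in> gen_group S \<Longrightarrow> inv g \<in> gen_group S"

definition stilde :: "nat \<Rightarrow> (nat \<Rightarrow> nat)" where
  "stilde i = rmult (rmult (rmult (sgen (2*i)) (sgen (2*i - 1))) (sgen (2*i + 1))) (sgen (2*i))"

definition Psi :: "nat \<Rightarrow> (nat \<Rightarrow> nat) set" where
  "Psi f = gen_group ({sgen (2*i - 1) | i. 1 \<le> i \<and> i \<le> f} \<union>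
                      {stilde i | i. 1 \<le> i \<and> i \<le> f - 1})"

end

theory Submission
  imports Defs
begin

definition pp :: "nat \<Rightarrow> nat" where
  "pp a = (if odd a then a + 1 else a - 1)"

definition blk :: "nat \<Rightarrow> nat" where
  "blk a = (a + 1) div 2"

definition blkp :: "nat \<Rightarrow> (nat \<Rightarrow> nat) \<Rightarrow> bool" where
  "blkp f w \<longleftrightarrow> w permutes {1..2*f} \<and> (\<forall>a. w (pp a) = pp (w a))"

lemma stilde_explicit:
  assumes "1 \<le> i"
  shows "stilde i x = (if x = 2*i-1 then 2*i+1 else if x = 2*i+1 then 2*i-1
     else if x = 2*i then 2*i+2 else if x = 2*i+2 then 2*i else x)"
  using assms unfolding stilde_def rmult_def sgen_def
  by (auto simp: transpose_def)

lemma blkp_sgen: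
  assumes "1 \<le> i" "i \<le> f"
  shows "blkp f (sgen (2*i - 1))"
proof -
  have "sgen (2*i - 1) permutes {1..2*f}"
    unfolding sgen_def using assms by (intro permutes_swap_id) auto
  moreover have "\<forall>a. sgen (2*i-1) (pp a) = pp (sgen (2*i-1) a)"
    using assms unfolding sgen_def pp_def by (auto simp: transpose_def split: if_splits; presburger)
  ultimately show ?thesis unfolding blkp_def by blast
qed

lemma blkp_stilde:
  assumes "1 \<le> i" "i \<le> f - 1"
  shows "blkp f (stilde i)"
proof -
  have "stilde i permutes {1..2*f}"
    unfolding stilde_def rmult_def sgen_def using assms
    by (intro permutes_compose permutes_swap_id) auto
  moreover have "\<forall>a. stilde i (pp a) = pp (stilde i a)"
  proof
    fix a
    have c: "a = 2*i-1 \<or> a = 2*i \<or> a = 2*i+1 \<or> a = 2*i+2 \<or>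
      (a \<noteq> 2*i-1 \<and> a \<noteq> 2*i \<and> a \<noteq> 2*i+1 \<and> a \<noteq> 2*i+2 \<and>
       pp a \<noteq> 2*i-1 \<and> pp a \<noteq> 2*i \<and> pp a \<noteq> 2*i+1 \<and> pp a \<noteq> 2*i+2)"
      using assms(1) unfolding pp_def by presburger
    have p1: "pp (2*i-1) = 2*i" "pp (2*i) = 2*i-1" "pp (2*i+1) = 2*i+2" "pp (2*i+2) = 2*i+1"
      using assms(1) unfolding pp_def by presburger+
    show "stilde i (pp a) = pp (stilde i a)"
      using c
    proof (elim disjE)
      assume "a = 2*i-1" then show ?thesis using assms(1) p1 by (auto simp: stilde_explicit)
    next
      assume "a = 2*i" then show ?thesis using assms(1) p1 by (auto simp: stilde_explicit)
    next
      assume "a = 2*i+1" then show ?thesis using assms(1) p1 by (auto simp: stilde_explicit)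
    next
      assume "a = 2*i+2" then show ?thesis using assms(1) p1 by (auto simp: stilde_explicit)
    next
      assume h: "a \<noteq> 2*i-1 \<and> a \<noteq> 2*i \<and> a \<noteq> 2*i+1 \<and> a \<noteq> 2*i+2 \<and>
       pp a \<noteq> 2*i-1 \<and> pp a \<noteq> 2*i \<and> pp a \<noteq> 2*i+1 \<and> pp a \<noteq> 2*i+2"
      have "stilde i a = a" using h assms(1) by (simp only: stilde_explicit if_False)
      moreover have "stilde i (pp a) = pp a" using h assms(1) by (simp only: stilde_explicit if_False)
      ultimately show ?thesis by simp
    qed
  qed
  ultimately show ?thesis unfolding blkp_def by blast
qed

lemma Psi_blkp:
  assumes "w \<in> Psi f"
  shows "blkp f w"
  using assms unfolding Psi_def
proof (induction rule: gen_group.induct)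
  case gen_id
  then show ?case unfolding blkp_def by (simp add: permutes_id)
next
  case (gen_gen s)
  then show ?case using blkp_sgen blkp_stilde by blast
next
  case (gen_mult g h)
  then show ?case unfolding blkp_def rmult_def
    by (auto intro: permutes_compose)
next
  case (gen_inv g)
  have gp: "g permutes {1..2*f}" and c: "\<And>a. g (pp a) = pp (g a)"
    using gen_inv unfolding blkp_def by auto
  have "inv g (pp a) = pp (inv g a)" for a
  proof -
    have "g (pp (inv g a)) = pp a" using c permutes_inverses(1)[OF gp] by simp
    then show ?thesis using permutes_inverses(2)[OF gp] by metis
  qed
  then show ?case unfolding blkp_def using permutes_inv[OF gp] by blast
qed

lemma chain:
  fixes d :: "nat \<Rightarrow> nat" and f k l :: nat
  assumes "\<forall>i\<in>{1..<f}. d (2*i - 1) < d (2*i + 1)"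
  shows "1 \<le> k \<Longrightarrow> k < l \<Longrightarrow> l \<le> f \<Longrightarrow> d (2*k-1) < d (2*l-1)"
proof (induction l)
  case 0
  then show ?case by simp
next
  case (Suc l)
  have e: "2 * Suc l - 1 = 2*l + 1" by simp
  show ?case
  proof (cases "k = l")
    case True
    then show ?thesis using assms Suc.prems e by auto
  next
    case False
    then have "d (2*k-1) < d (2*l-1)" using Suc by auto
    moreover have "d (2*l-1) < d (2*l+1)" using assms Suc.prems False by auto
    ultimately show ?thesis using e by simp
  qed
qed

lemma L1:
  fixes d :: "nat \<Rightarrow> nat" and f a b :: nat
  assumes h1: "\<forall>i\<in>{1..f}. d (2*i - 1) < d (2*i)"
    and h2: "\<forall>i\<in>{1..<f}. d (2*i - 1) < d (2*i + 1)"
    and a: "1 \<le> a" and b: "b \<le> 2*f" and ab: "blk a < blk b"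
  shows "d (2 * blk a - 1) < d b"
proof -
  have ka: "1 \<le> blk a" using a unfolding blk_def by auto
  have kb: "blk b \<le> f" using b unfolding blk_def by auto
  have c: "d (2 * blk a - 1) < d (2 * blk b - 1)" using chain[OF h2 ka ab kb] .
  show ?thesis
  proof (cases "odd b")
    case True
    then have "b = 2 * blk b - 1" unfolding blk_def by (auto elim!: oddE)
    then show ?thesis using c by simp
  next
    case False
    then have e: "b = 2 * blk b" unfolding blk_def by (auto elim!: evenE)
    have "1 \<le> blk b" using ka ab by simp
    then have "d (2 * blk b - 1) < d (2 * blk b)" using h1 kb by auto
    then have "d (2 * blk a - 1) < d (2 * blk b)" using c by linarith
    then show ?thesis using e by simp
  qed
qed

lemma inv_props:
  fixes d :: "nat \<Rightarrow> nat" and f i j :: nat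
  assumes dS: "d permutes {1..2*f}"
    and h1: "\<forall>i\<in>{1..f}. d (2*i - 1) < d (2*i)"
    and h2: "\<forall>i\<in>{1..<f}. d (2*i - 1) < d (2*i + 1)"
    and i1: "1 \<le> i" and ij: "i < j" and dij: "d j < d i"
  shows "j \<le> 2*f \<and> blk i < blk j \<and> even i \<and> d (i - 1) < d j"
proof -
  have jS: "j \<le> 2*f"
  proof (rule ccontr)
    assume "\<not> j \<le> 2*f"
    then have dj: "d j = j" using permutes_not_in[OF dS] by auto
    show False
    proof (cases "i \<le> 2*f")
      case True
      then have "d i \<in> {1..2*f}" using permutes_in_image[OF dS] i1 by auto
      then show False using dj dij \<open>\<not> j \<le> 2*f\<close> by auto
    next
      case False
      then have "d i = i" using permutes_not_in[OF dS] by auto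
      then show False using dj dij ij by auto
    qed
  qed
  have bij: "blk i < blk j"
  proof (rule ccontr)
    assume "\<not> blk i < blk j"
    moreover have "blk i \<le> blk j" using ij unfolding blk_def by (simp add: div_le_mono)
    ultimately have eq: "blk i = blk j" by simp
    then have "odd i" "j = i + 1" using ij unfolding blk_def by presburger+
    then have "i = 2 * blk i - 1" "j = 2 * blk i" unfolding blk_def by presburger+
    moreover have "blk i \<in> {1..f}" using i1 jS eq unfolding blk_def by auto
    ultimately show False using h1 dij by (metis less_asym)
  qed
  have ev: "even i"
  proof (rule ccontr)
    assume "odd i"
    then have "i = 2 * blk i - 1" unfolding blk_def by presburger
    then show False using L1[OF h1 h2 i1 jS bij] dij by simp
  qed
  then have "i - 1 = 2 * blk i - 1" unfolding blk_def by presburger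
  then show ?thesis using L1[OF h1 h2 i1 jS bij] jS bij ev by simp
qed

theorem lemma5p7:
  fixes n f :: nat and d w :: "nat \<Rightarrow> nat"
  assumes "1 \<le> f" and "f \<le> n div 2"
    and "d \<in> D_f n f" and "w \<in> Psi f"
  shows "len n (rmult w d) \<ge> len n d"
proof -
  have fn: "2*f \<le> n" using assms(2) by simp
  have dS: "d permutes {1..2*f}" using assms(3) by (simp add: D_f_def Sym_def)
  have h1: "\<forall>i\<in>{1..f}. d (2*i - 1) < d (2*i)"
    and h2: "\<forall>i\<in>{1..<f}. d (2*i - 1) < d (2*i + 1)"
    using assms(3) by (auto simp: D_f_def D_nu_def)
  define u where "u = inv w"
  have wP: "blkp f w" using Psi_blkp[OF assms(4)] .
  have wS: "w permutes {1..2*f}" using wP unfolding blkp_def by simp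
  have uP: "blkp f u" unfolding u_def Psi_def
    using Psi_blkp assms(4) unfolding Psi_def by (blast intro: gen_group.gen_inv)
  have uS: "u permutes {1..2*f}" and uc: "\<And>a. u (pp a) = pp (u a)"
    using uP unfolding blkp_def by auto
  have wu: "\<And>x. w (u x) = x" unfolding u_def using permutes_inverses(1)[OF wS] .
  have uinj: "inj u" using permutes_inj[OF uS] .
  have uin: "\<And>x. x \<in> {1..2*f} \<Longrightarrow> u x \<in> {1..2*f}" using permutes_in_image[OF uS] by blast
  define A where "A = {(i, j). 1 \<le> i \<and> i < j \<and> j \<le> n \<and> d i > d j}"
  define B where "B = {(i, j). 1 \<le> i \<and> i < j \<and> j \<le> n \<and> (d \<circ> w) i > (d \<circ> w) j}"
  define g where "g = (\<lambda>(i::nat, j::nat). if u i < u j then (u i, u j) else (u j, u (i - 1)))"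
  have P: "j \<le> 2*f \<and> blk i < blk j \<and> even i \<and> d (i - 1) < d j" if "(i, j) \<in> A" for i j
    using inv_props[OF dS h1 h2] that unfolding A_def by auto
  have img: "g ` A \<subseteq> B"
  proof
    fix x assume "x \<in> g ` A"
    then obtain i j where ijA: "(i, j) \<in> A" and x: "x = g (i, j)" by auto
    have p: "j \<le> 2*f" "blk i < blk j" "even i" "d (i - 1) < d j" using P[OF ijA] by auto
    have i1: "1 \<le> i" "i < j" "d j < d i" using ijA unfolding A_def by auto
    have i2: "2 \<le> i" using i1 p(3) by presburger
    have iS: "i \<in> {1..2*f}" "j \<in> {1..2*f}" "i - 1 \<in> {1..2*f}" using i1 i2 p by auto
    have uiS: "u i \<in> {1..2*f}" "u j \<in> {1..2*f}" "u (i - 1) \<in> {1..2*f}" using uin iS by auto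
    show "x \<in> B"
    proof (cases "u i < u j")
      case True
      then show ?thesis using x uiS fn wu i1 unfolding g_def B_def by auto
    next
      case False
      have ne: "u i \<noteq> u j" using uinj i1 by (metis inj_eq less_irrefl)
      have ppi: "pp i = i - 1" using p(3) unfolding pp_def by simp
      have "u j < u (i - 1)"
      proof (rule ccontr)
        assume a: "\<not> u j < u (i - 1)"
        have "u (i - 1) = pp (u i)" using uc[of i] ppi by simp
        then have "u j = u (i - 1)" using a False ne unfolding pp_def by (auto split: if_splits)
        then have "j = i - 1" using uinj by (simp add: inj_eq)
        then show False using i1 by simp
      qed
      then show ?thesis using x uiS fn wu i1 p(4) False unfolding g_def B_def by auto
    qed
  qed
  have inj: "inj_on g A"
  proof (rule inj_onI)
    fix x y assume xA: "x \<in> A" and yA: "y \<in> A" and e: "g x = g y"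
    obtain i j where x: "x = (i, j)" by force
    obtain i' j' where y: "y = (i', j')" by force
    have p: "blk i < blk j" "even i" "blk i' < blk j'" "even i'" "1 \<le> i" "1 \<le> i'"
      using P xA yA x y unfolding A_def by auto
    have b1: "blk (i - 1) = blk i" "blk (i' - 1) = blk i'" using p unfolding blk_def by presburger+
    have ii: "i - 1 = i' - 1 \<Longrightarrow> i = i'" using p by presburger
    show "x = y"
    proof (cases "u i < u j"; cases "u i' < u j'")
      assume "u i < u j" "u i' < u j'"
      then show ?thesis using e x y uinj unfolding g_def by (auto simp: inj_eq)
    next
      assume "\<not> u i < u j" "\<not> u i' < u j'"
      then show ?thesis using e x y uinj ii unfolding g_def by (auto simp: inj_eq)
    next
      assume "u i < u j" "\<not> u i' < u j'"
      then have "i = j'" "j = i' - 1" using e x y uinj unfolding g_def by (auto simp: inj_eq)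
      then show ?thesis using p b1 by simp
    next
      assume "\<not> u i < u j" "u i' < u j'"
      then have "i' = j" "j' = i - 1" using e x y uinj unfolding g_def by (auto simp: inj_eq)
      then show ?thesis using p b1 by simp
    qed
  qed
  have fB: "finite B" unfolding B_def
    by (rule finite_subset[of _ "{..n} \<times> {..n}"]) auto
  have "card A \<le> card B" using card_inj_on_le[OF inj img fB] .
  then show ?thesis unfolding len_def A_def B_def rmult_def by simp
qed

end
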